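(* Let $d\ge 3$ and let $P$ be a finite set of points in $\mathbb{R}^d$. Let $C$ be the set of centers of all smallest axis-aligned hypercubes enclosing $P$. Then there exists a minimum-width hypercubic shell enclosing $P$ whose center lies in $C$.
   Context: The $L_\infty$ norm is $\|p\|=\max_i|x_i(p)|$; $\mathbf{B}(c,r)=\{q:\|q-c\|\le r\}$ is the axis-aligned hypercube with center $c$ and radius $r$. A smallest enclosing hypercube of $P$ is one of minimum radius containing $P$. A hypercubic shell with center $c$ is $\mathbf{B}(c,r)\setminus\operatorname{int}\mathbf{B}(c,r')$ with $r\ge r'\ge0$, of width $r-r'$; it encloses $P$ if it contains $P$. A minimum-width hypercubic shell enclosing $P$ is one of smallest width among all hypercubic shells enclosing $P$. *)

theory Defs
  imports "HOL-Analysis.Analysis"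
begin

definition hcube :: "real^'n \<Rightarrow> real \<Rightarrow> (real^'n) set" where
  "hcube c r = {q. infnorm (q - c) \<le> r}"

definition smallest_enclosing_hcube :: "(real^'n) set \<Rightarrow> real^'n \<Rightarrow> real \<Rightarrow> bool" where
  "smallest_enclosing_hcube P c r \<longleftrightarrow>
     0 \<le> r \<and> P \<subseteq> hcube c r \<and>
     (\<forall>c' r'. 0 \<le> r' \<and> P \<subseteq> hcube c' r' \<longrightarrow> r \<le> r')"

definition seh_centers :: "(real^'n) set \<Rightarrow> (real^'n) set" where
  "seh_centers P = {c. \<exists>r. smallest_enclosing_hcube P c r}"

definition hshell :: "real^'n \<Rightarrow> real \<Rightarrow> real \<Rightarrow> (real^'n) set" where
  "hshell c r r' = hcube c r - interior (hcube c r')"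

definition min_width_shell :: "(real^'n) set \<Rightarrow> real^'n \<Rightarrow> real \<Rightarrow> real \<Rightarrow> bool" where
  "min_width_shell P c r r' \<longleftrightarrow>
     0 \<le> r' \<and> r' \<le> r \<and> P \<subseteq> hshell c r r' \<and>
     (\<forall>c2 s s'. 0 \<le> s' \<and> s' \<le> s \<and> P \<subseteq> hshell c2 s s' \<longrightarrow> r - r' \<le> s - s')"

end

theory Submission
  imports Defs
begin

definition FF :: "(real^'n) set \<Rightarrow> real^'n \<Rightarrow> real" where
  "FF P c = Max ((\<lambda>p. infnorm (p - c)) ` P)"
definition GG :: "(real^'n) set \<Rightarrow> real^'n \<Rightarrow> real" where
  "GG P c = Min ((\<lambda>p. infnorm (p - c)) ` P)"

lemma infnorm_le_comp:
  fixes x :: "real^'n"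
  assumes "\<And>i. \<bar>x$i\<bar> \<le> B"
  shows "infnorm x \<le> B"
  unfolding infnorm_cart
  by (rule cSup_least) (auto simp: assms)

lemma FF_ge: "finite P \<Longrightarrow> p \<in> P \<Longrightarrow> infnorm (p - c) \<le> FF P c"
  unfolding FF_def by (rule Max_ge) auto

lemma GG_le: "finite P \<Longrightarrow> p \<in> P \<Longrightarrow> GG P c \<le> infnorm (p - c)"
  unfolding GG_def by (rule Min_le) auto

lemma FF_le: "finite P \<Longrightarrow> P \<noteq> {} \<Longrightarrow> (\<And>p. p \<in> P \<Longrightarrow> infnorm (p - c) \<le> B) \<Longrightarrow> FF P c \<le> B"
  unfolding FF_def by (subst Max_le_iff) auto

lemma GG_in: "finite P \<Longrightarrow> P \<noteq> {} \<Longrightarrow> \<exists>p\<in>P. GG P c = infnorm (p - c)"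
proof -
  assume "finite P" "P \<noteq> {}"
  then have "Min ((\<lambda>p. infnorm (p - c)) ` P) \<in> (\<lambda>p. infnorm (p - c)) ` P" by (intro Min_in) auto
  then show ?thesis unfolding GG_def by auto
qed

lemma FF_lip:
  assumes "finite P" "P \<noteq> {}"
  shows "FF P c \<le> FF P d + infnorm (c - d)"
proof (rule FF_le[OF assms])
  fix p assume p: "p \<in> P"
  have "infnorm (p - c) = infnorm ((p - d) + (d - c))" by simp
  also have "\<dots> \<le> infnorm (p - d) + infnorm (d - c)" by (rule infnorm_triangle)
  also have "\<dots> \<le> FF P d + infnorm (c - d)" using FF_ge[OF assms(1) p, of d] infnorm_sub[of d c] by simp
  finally show "infnorm (p - c) \<le> FF P d + infnorm (c - d)" .
qed

lemma GG_lip: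
  assumes "finite P" "P \<noteq> {}"
  shows "GG P d \<le> GG P c + infnorm (c - d)"
proof -
  obtain p where p: "p \<in> P" "GG P c = infnorm (p - c)" using GG_in[OF assms] by blast
  have "GG P d \<le> infnorm (p - d)" by (rule GG_le[OF assms(1) p(1)])
  also have "infnorm (p - d) = infnorm ((p - c) + (c - d))" by simp
  also have "\<dots> \<le> infnorm (p - c) + infnorm (c - d)" by (rule infnorm_triangle)
  finally show ?thesis using p(2) by simp
qed

lemma GG_nonneg: "finite P \<Longrightarrow> P \<noteq> {} \<Longrightarrow> 0 \<le> GG P c"
  using GG_in[of P c] infnorm_pos_le by fastforce

lemma W_cont:
  assumes "finite P" "P \<noteq> {}"
  shows "continuous_on S (\<lambda>c. FF P c - GG P c)"
proof (rule lipschitz_on_continuous_on[where L=2], rule lipschitz_onI)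
  fix x y :: "real^'a"
  have "\<bar>(FF P x - GG P x) - (FF P y - GG P y)\<bar> \<le> 2 * infnorm (x - y)"
    using FF_lip[OF assms, of x y] FF_lip[OF assms, of y x] GG_lip[OF assms, of x y]
      GG_lip[OF assms, of y x] infnorm_sub[of x y] by linarith
  also have "\<dots> \<le> 2 * norm (x - y)" using infnorm_le_norm[of "x - y"] by simp
  finally show "dist (FF P x - GG P x) (FF P y - GG P y) \<le> 2 * dist x y"
    by (simp add: dist_real_def dist_norm)
qed simp

lemma not_interior:
  fixes c p :: "real^'n"
  assumes "t \<le> infnorm (p - c)" "0 \<le> t"
  shows "p \<notin> interior (hcube c t)"
proof
  assume pi: "p \<in> interior (hcube c t)"
  show False
  proof (cases "t = 0")
    case True
    have "hcube c t = {c}"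
    proof
      show "hcube c t \<subseteq> {c}"
      proof
        fix x assume "x \<in> hcube c t"
        then have "infnorm (x - c) \<le> 0" using True by (simp add: hcube_def)
        then have "infnorm (x - c) = 0" using infnorm_pos_le[of "x - c"] by linarith
        then show "x \<in> {c}" by (simp add: infnorm_eq_0)
      qed
      show "{c} \<subseteq> hcube c t" using True by (simp add: hcube_def infnorm_0)
    qed
    then show False using pi by simp
  next
    case False
    then have tp: "t > 0" using assms by simp
    obtain e where e: "e > 0" "ball p e \<subseteq> hcube c t" using pi mem_interior by blast
    have pc: "p - c \<noteq> 0" using tp assms(1) by (auto simp: infnorm_0)
    then have np: "norm (p - c) > 0" by simp
    define k where "k = e / 2 / norm (p - c)"
    have kp: "k > 0" using e np by (simp add: k_def)
    define q where "q = p + k *\<^sub>R (p - c)"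
    have "dist p q = k * norm (p - c)" using kp by (simp add: q_def dist_norm)
    also have "\<dots> = e / 2" using np by (simp add: k_def)
    finally have "q \<in> ball p e" using e by simp
    then have "infnorm (q - c) \<le> t" using e by (auto simp: hcube_def)
    moreover have "q - c = (1 + k) *\<^sub>R (p - c)" by (simp add: q_def algebra_simps)
    then have "infnorm (q - c) = (1 + k) * infnorm (p - c)" using kp by (simp add: infnorm_mul)
    moreover have "(1 + k) * infnorm (p - c) > infnorm (p - c)"
      using kp assms tp by simp
    ultimately show False using assms by linarith
  qed
qed

lemma shell_lower:
  fixes c :: "real^'n"
  assumes "p \<in> hshell c s s'"
  shows "s' \<le> infnorm (p - c) \<and> infnorm (p - c) \<le> s"
proof
  show "infnorm (p - c) \<le> s" using assms by (auto simp: hshell_def hcube_def)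
  show "s' \<le> infnorm (p - c)"
  proof (rule ccontr)
    assume "\<not> s' \<le> infnorm (p - c)"
    then have "p \<in> {q. infnorm (q - c) < s'}" by simp
    moreover have "open {q. infnorm (q - c) < s'}"
      by (intro open_Collect_less continuous_intros)
    moreover have "{q. infnorm (q - c) < s'} \<subseteq> hcube c s'" by (auto simp: hcube_def)
    ultimately have "p \<in> interior (hcube c s')" using interior_maximal by blast
    then show False using assms by (simp add: hshell_def)
  qed
qed

theorem lemma3:
  fixes P :: "(real^'n) set"
  assumes "CARD('n) \<ge> 3"
    and "finite P"
  shows "\<exists>c r r'. min_width_shell P c r r' \<and> c \<in> seh_centers P"
proof (cases "P = {}")
  case True
  have "min_width_shell P 0 0 0" using True by (simp add: min_width_shell_def)
  moreover have "smallest_enclosing_hcube P 0 0" using True by (simp add: smallest_enclosing_hcube_def)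
  ultimately show ?thesis by (auto simp: seh_centers_def)
next
  case False
  note fin = assms(2)
  define a where "a i = Min ((\<lambda>p. p$i) ` P)" for i
  define b where "b i = Max ((\<lambda>p. p$i) ` P)" for i
  define R where "R = Max (range (\<lambda>i. b i - a i)) / 2"
  have a_le: "a i \<le> p$i" if "p \<in> P" for p i unfolding a_def using fin that by auto
  have b_ge: "p$i \<le> b i" if "p \<in> P" for p i unfolding b_def using fin that by auto
  have a_in: "\<exists>p\<in>P. p$i = a i" for i
  proof -
    have "Min ((\<lambda>p. p$i) ` P) \<in> (\<lambda>p. p$i) ` P" using fin False by (intro Min_in) auto
    then show ?thesis unfolding a_def by auto
  qed
  have b_in: "\<exists>p\<in>P. p$i = b i" for i
  proof -
    have "Max ((\<lambda>p. p$i) ` P) \<in> (\<lambda>p. p$i) ` P" using fin False by (intro Max_in) auto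
    then show ?thesis unfolding b_def by auto
  qed
  have ab2R: "b i - a i \<le> 2 * R" for i unfolding R_def by (simp add: Max_ge)
  obtain j where j: "b j - a j = 2 * R"
  proof -
    have "Max (range (\<lambda>i. b i - a i)) \<in> range (\<lambda>i. b i - a i)" by (intro Max_in) auto
    then obtain i where "Max (range (\<lambda>i. b i - a i)) = b i - a i" by blast
    then show ?thesis using that[of i] unfolding R_def by simp
  qed
  have Rnn: "0 \<le> R"
  proof -
    obtain p where "p \<in> P" using False by blast
    then have "a j \<le> b j" using a_le[of p j] b_ge[of p j] by linarith
    then show ?thesis using j by linarith
  qed
  have A: "R \<le> FF P c" for c
  proof -
    obtain p where p: "p \<in> P" "p$j = a j" using a_in by blast
    obtain q where q: "q \<in> P" "q$j = b j" using b_in by blast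
    have "\<bar>(p - c)$j\<bar> \<le> FF P c" using component_le_infnorm_cart FF_ge[OF fin p(1)] order_trans by blast
    moreover have "\<bar>(q - c)$j\<bar> \<le> FF P c" using component_le_infnorm_cart FF_ge[OF fin q(1)] order_trans by blast
    ultimately show ?thesis using p q j by auto
  qed
  define lo :: "real^'n" where "lo = (\<chi> i. b i - R)"
  define hi :: "real^'n" where "hi = (\<chi> i. a i + R)"
  have B: "infnorm (p - c) \<le> R" if "c \<in> cbox lo hi" "p \<in> P" for c p
  proof (rule infnorm_le_comp)
    fix i
    have "b i - R \<le> c$i" "c$i \<le> a i + R" using that(1) by (auto simp: mem_box_cart lo_def hi_def)
    then show "\<bar>(p - c)$i\<bar> \<le> R" using a_le[OF that(2), of i] b_ge[OF that(2), of i] by auto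
  qed
  have FB: "FF P c \<le> R" if "c \<in> cbox lo hi" for c
    using FF_le[OF fin False] B[OF that] by blast
  have C: "smallest_enclosing_hcube P c R" if "c \<in> cbox lo hi" for c
    unfolding smallest_enclosing_hcube_def
  proof (intro conjI allI impI)
    show "0 \<le> R" by (rule Rnn)
    show "P \<subseteq> hcube c R" using B[OF that] by (auto simp: hcube_def)
    fix c' r' assume h: "0 \<le> r' \<and> P \<subseteq> hcube c' r'"
    have "FF P c' \<le> r'" using h by (intro FF_le[OF fin False]) (auto simp: hcube_def)
    then show "R \<le> r'" using A[of c'] by simp
  qed
  define cl :: "real^'n \<Rightarrow> real^'n" where "cl c = (\<chi> i. max (lo$i) (min (hi$i) (c$i)))" for c
  have lohi: "lo$i \<le> hi$i" for i using ab2R[of i] by (simp add: lo_def hi_def)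
  have cl_in: "cl c \<in> cbox lo hi" for c using lohi by (auto simp: mem_box_cart cl_def)
  have D: "infnorm (c - cl c) \<le> FF P c - R" for c
  proof (rule infnorm_le_comp)
    fix i
    obtain p where p: "p \<in> P" "p$i = a i" using a_in by blast
    obtain q where q: "q \<in> P" "q$i = b i" using b_in by blast
    have "\<bar>(p - c)$i\<bar> \<le> FF P c" using component_le_infnorm_cart FF_ge[OF fin p(1)] order_trans by blast
    moreover have "\<bar>(q - c)$i\<bar> \<le> FF P c" using component_le_infnorm_cart FF_ge[OF fin q(1)] order_trans by blast
    ultimately show "\<bar>(c - cl c)$i\<bar> \<le> FF P c - R" using p q A[of c] lohi[of i]
      by (auto simp: cl_def lo_def hi_def)
  qed
  have E: "FF P (cl c) - GG P (cl c) \<le> FF P c - GG P c" for c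
    using FB[OF cl_in[of c]] GG_lip[OF fin False, of c "cl c"] D[of c] infnorm_sub[of c "cl c"] by linarith
  obtain cs where cs: "cs \<in> cbox lo hi" "\<And>c. c \<in> cbox lo hi \<Longrightarrow> FF P cs - GG P cs \<le> FF P c - GG P c"
    using continuous_attains_inf[OF compact_cbox, of lo hi "\<lambda>c. FF P c - GG P c"]
      W_cont[OF fin False] cl_in by blast
  have "min_width_shell P cs (FF P cs) (GG P cs)"
    unfolding min_width_shell_def
  proof (intro conjI allI impI)
    show "0 \<le> GG P cs" by (rule GG_nonneg[OF fin False])
    obtain p where "p \<in> P" using False by blast
    then show "GG P cs \<le> FF P cs" using GG_le[OF fin] FF_ge[OF fin] order_trans by blast
    show "P \<subseteq> hshell cs (FF P cs) (GG P cs)"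
    proof
      fix p assume p: "p \<in> P"
      have "p \<in> hcube cs (FF P cs)" using FF_ge[OF fin p] by (simp add: hcube_def)
      moreover have "p \<notin> interior (hcube cs (GG P cs))"
        by (rule not_interior[OF GG_le[OF fin p] GG_nonneg[OF fin False]])
      ultimately show "p \<in> hshell cs (FF P cs) (GG P cs)" by (simp add: hshell_def)
    qed
    fix c2 s s' assume h: "0 \<le> s' \<and> s' \<le> s \<and> P \<subseteq> hshell c2 s s'"
    have "FF P c2 \<le> s" using h shell_lower by (intro FF_le[OF fin False]) blast
    moreover obtain p where p: "p \<in> P" "GG P c2 = infnorm (p - c2)" using GG_in[OF fin False] by blast
    then have "p \<in> hshell c2 s s'" using h by blast
    then have "s' \<le> infnorm (p - c2)" by (rule shell_lower[THEN conjunct1])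
    then have "s' \<le> GG P c2" using p(2) by simp
    ultimately show "FF P cs - GG P cs \<le> s - s'" using cs(2)[OF cl_in[of c2]] E[of c2] by linarith
  qed
  moreover have "cs \<in> seh_centers P" using C[OF cs(1)] by (auto simp: seh_centers_def)
  ultimately show ?thesis by blast
qed

end
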